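(* Suppose $N>K$, $2\le g\le \frac{K}{3\lceil N/M\rceil}$ and $\lceil N/M\rceil\le \frac{K}{\frac{27}{4}\log K}$. Use the new placement scheme with $F=\lceil N/M\rceil F'$ packets per file, where $F'=c\binom{K}{g}\big(\log\binom{K}{g}\big)^2$ for a constant $c>0$ (so $F=O\big(\binom{K}{g}(\log\binom{K}{g})^2\lceil N/M\rceil\big)$), and use the modified (pull-down) delivery scheme with parameter $g$. Then for every demand vector $\mathbf{d}\in[1:N]^K$, $$\mathbb{E}\big[R^{md}(\mathcal{C},\mathbf{d})\big]\le \frac43\,\frac{K}{g+1}\,(1+o(1)),$$ where the expectation is over the randomness of both placement and delivery and $o(1)\to0$ as $K\to\infty$.
   Context: Setting: a server holds a library of $N$ files, each split into $F$ packets (packet $f$ of file $n$ denoted $(n,f)$); $K$ users each have a cache of size $M$ files ($M\le N$). For a cache configuration $\mathcal{C}$, $S_{n,f}\subseteq[1:K]$ is the set of users whose cache stores packet $(n,f)$. User $k$ requests file $d_k$. New placement scheme: $F=\lceil N/M\rceil F'$ with $F'$ a positive integer; the packets of every file are partitioned into $F'$ groups of $\lceil N/M\rceil$ packets. For every user $k$, file $n$ and group, exactly one packet of the group is chosen uniformly at random and stored in user $k$'s cache; all choices are independent. Modified delivery scheme with parameter $g$: (1) Pull-down phase: for every $k\in[1:K]$ and $f\in[1:F]$ with $|S_{d_k,f}|\ge g+1$, replace $S_{d_k,f}$ (virtually, for delivery purposes only) by a uniformly random $g$-element subset of $S_{d_k,f}$, independently; other sets are unchanged. (2) With these modified sets,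 for $k\in[1:K]$ and $T\subseteq[1:K]\setminus\{k\}$ let $V_{k,T}$ be the set of packets $f$ of file $d_k$ whose (modified) set equals $T$; for every nonempty $\mathcal{S}\subseteq[1:K]$ transmit the XOR of the zero-padded packet vectors $V_{k,\mathcal{S}\setminus\{k\}}$, $k\in\mathcal{S}$. The normalized number of transmissions is $$R^{md}(\mathcal{C},\mathbf{d})=\sum_{\emptyset\ne\mathcal{S}\subseteq[1:K]}\frac{\max_{k\in\mathcal{S}}|V_{k,\mathcal{S}\setminus\{k\}}|}{F},$$ a random variable depending on the placement and on the random choices in the pull-down phase. *)

theory Defs
  imports "HOL-Probability.Probability"
begin

text \<open>Conventions: users are 0..K-1, files 0..N-1, packets 0..F-1, groups 0..F'-1.
  q = ceil(N/M) is the group size; packet f belongs to group f div q and has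
  position f mod q inside its group (F = q * F').\<close>

definition grp_size :: "nat \<Rightarrow> real \<Rightarrow> nat" where
  "grp_size N M = nat \<lceil>real N / M\<rceil>"

text \<open>A placement configuration: pl (k, n, j) = index (in 0..q-1) of the packet of group j
  of file n stored by user k.\<close>
type_synonym placement = "nat \<times> nat \<times> nat \<Rightarrow> nat"

definition placement_pmf :: "nat \<Rightarrow> nat \<Rightarrow> nat \<Rightarrow> nat \<Rightarrow> placement pmf" where
  "placement_pmf K N q F' =
     pmf_of_set (PiE ({..<K} \<times> {..<N} \<times> {..<F'}) (\<lambda>_. {..<q}))"

definition cache_set :: "nat \<Rightarrow> nat \<Rightarrow> placement \<Rightarrow> nat \<Rightarrow> nat \<Rightarrow> nat set" where
  "cache_set K q pl n f = {k \<in> {..<K}. pl (k, n, f div q) = f mod q}"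

definition pulldown_choices :: "nat \<Rightarrow> nat set \<Rightarrow> nat set set" where
  "pulldown_choices g S =
     (if g + 1 \<le> card S then {T. T \<subseteq> S \<and> card T = g} else {S})"

definition pulldown_pmf :: "nat \<Rightarrow> nat \<Rightarrow> nat \<Rightarrow> nat \<Rightarrow> (nat \<Rightarrow> nat) \<Rightarrow> placement
    \<Rightarrow> (nat \<times> nat \<Rightarrow> nat set) pmf" where
  "pulldown_pmf K q F g d pl =
     pmf_of_set (PiE ({..<K} \<times> {..<F})
        (\<lambda>(k, f). pulldown_choices g (cache_set K q pl (d k) f)))"

definition Vset :: "nat \<Rightarrow> (nat \<times> nat \<Rightarrow> nat set) \<Rightarrow> nat \<Rightarrow> nat set \<Rightarrow> nat set" where
  "Vset F T k A = {f \<in> {..<F}. T (k, f) = A}"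

definition rate_md :: "nat \<Rightarrow> nat \<Rightarrow> (nat \<times> nat \<Rightarrow> nat set) \<Rightarrow> real" where
  "rate_md K F T =
     (\<Sum>S\<in>Pow {..<K} - {{}}. real (Max ((\<lambda>k. card (Vset F T k (S - {k}))) ` S)) / real F)"

definition expected_rate_md ::
    "nat \<Rightarrow> nat \<Rightarrow> real \<Rightarrow> nat \<Rightarrow> nat \<Rightarrow> (nat \<Rightarrow> nat) \<Rightarrow> real" where
  "expected_rate_md K N M F' g d =
     (let q = grp_size N M; F = q * F' in
      measure_pmf.expectation
        (bind_pmf (placement_pmf K N q F') (\<lambda>pl. pulldown_pmf K q F g d pl))
        (rate_md K F))"

end

theory Submission
  imports Defs "HOL-Real_Asymp.Real_Asymp"
begin

lemma avg_PiE_prod: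
  fixes h :: "'i \<Rightarrow> 'a \<Rightarrow> real"
  assumes "finite I" "\<And>i. i \<in> I \<Longrightarrow> finite (A i)" "\<And>i. i \<in> I \<Longrightarrow> A i \<noteq> {}"
  shows "(\<Sum>x\<in>PiE I A. \<Prod>i\<in>I. h i (x i)) / real (card (PiE I A))
         = (\<Prod>i\<in>I. (\<Sum>a\<in>A i. h i a) / real (card (A i)))"
  using assms by (simp add: prod_sum_PiE[symmetric] card_PiE prod_dividef)

lemma pc_finite: "finite S \<Longrightarrow> finite (pulldown_choices g S)"
  unfolding pulldown_choices_def by (auto intro: finite_subset[of _ "Pow S"])

lemma pc_card_big: "finite S \<Longrightarrow> g + 1 \<le> card S \<Longrightarrow> card (pulldown_choices g S) = card S choose g"
  unfolding pulldown_choices_def by (simp add: n_subsets)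

lemma pc_nonempty: "finite S \<Longrightarrow> pulldown_choices g S \<noteq> {}"
proof -
  assume f: "finite S"
  show ?thesis
  proof (cases "g + 1 \<le> card S")
    case True
    then have "card (pulldown_choices g S) > 0" using pc_card_big[OF f True] by simp
    then show ?thesis by auto
  qed (simp add: pulldown_choices_def)
qed

lemma pc_mem: "T \<in> pulldown_choices g S \<Longrightarrow> T \<subseteq> S \<and> (card T = g \<or> (T = S \<and> card S \<le> g))"
  unfolding pulldown_choices_def by (auto split: if_splits)

definition wA :: "nat \<Rightarrow> nat set \<Rightarrow> nat set \<Rightarrow> real" where
  "wA g A S = (if A \<in> pulldown_choices g S then 1 / real (card (pulldown_choices g S)) else 0)"

lemma wA_closed: "finite S \<Longrightarrow> wA g A S =
   (if g + 1 \<le> card S then (if A \<subseteq> S \<and> card A = g then 1 / real (card S choose g) else 0)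
    else (if A = S then 1 else 0))"
  unfolding wA_def by (auto simp: pc_card_big) (auto simp: pulldown_choices_def split: if_splits)

lemma wA_nonneg: "wA g A S \<ge> 0" unfolding wA_def by auto

lemma wA_le1: "finite S \<Longrightarrow> wA g A S \<le> 1"
proof -
  assume f: "finite S"
  have "card (pulldown_choices g S) \<ge> 1" using pc_nonempty[OF f] pc_finite[OF f]
    by (simp add: Suc_leI card_gt_0_iff)
  then show ?thesis unfolding wA_def by auto
qed

lemma wA_sub: "wA g A S \<noteq> 0 \<Longrightarrow> A \<subseteq> S"
  unfolding wA_def using pc_mem by (auto split: if_splits)

lemma exp_card_prod:
  "exp (t * real (card {f\<in>{..<F::nat}. P f})) = (\<Prod>f<F. if P f then exp t else 1)"
proof -
  have "(\<Prod>f<F. if P f then exp t else 1) = (\<Prod>f\<in>{..<F} \<inter> {f. P f}. exp t) * (\<Prod>f\<in>{..<F} \<inter> - {f. P f}. 1)"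
    by (rule prod.If_cases) simp
  also have "\<dots> = exp t ^ card {f\<in>{..<F}. P f}" by (simp add: Int_def)
  finally show ?thesis by (simp add: exp_of_nat_mult[symmetric] mult.commute)
qed

lemma avg_one_coord:
  fixes Ch :: "nat \<times> nat \<Rightarrow> nat set set"
  assumes fin: "\<And>i. finite (Ch i)" and ne: "\<And>i. Ch i \<noteq> {}" and k: "k < K"
  shows "(\<Sum>T\<in>PiE ({..<K}\<times>{..<F}) Ch. exp (t * real (card (Vset F T k A))))
           / real (card (PiE ({..<K}\<times>{..<F}) Ch))
       = (\<Prod>f<F. 1 + (exp t - 1) * (if A \<in> Ch (k,f) then 1 / real (card (Ch (k,f))) else 0))"
proof -
  define h where "h = (\<lambda>(i::nat\<times>nat) (c::nat set). if fst i = k then (if c = A then exp t else 1) else (1::real))"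
  have eq: "exp (t * real (card (Vset F T k A))) = (\<Prod>i\<in>{..<K}\<times>{..<F}. h i (T i))" for T
  proof -
    have "(\<Prod>i\<in>{..<K}\<times>{..<F}. h i (T i)) = (\<Prod>k'<K. \<Prod>f<F. h (k',f) (T (k',f)))"
      by (simp add: prod.cartesian_product)
    also have "\<dots> = (\<Prod>k'<K. if k' = k then (\<Prod>f<F. if T (k,f) = A then exp t else 1) else 1)"
      by (intro prod.cong) (auto simp: h_def)
    also have "\<dots> = (\<Prod>f<F. if T (k,f) = A then exp t else 1)"
      using k by (simp add: prod.delta)
    finally show ?thesis unfolding Vset_def using exp_card_prod[of t F "\<lambda>f. T (k,f) = A"] by simp
  qed
  have "(\<Sum>T\<in>PiE ({..<K}\<times>{..<F}) Ch. exp (t * real (card (Vset F T k A))))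
           / real (card (PiE ({..<K}\<times>{..<F}) Ch))
      = (\<Sum>T\<in>PiE ({..<K}\<times>{..<F}) Ch. \<Prod>i\<in>{..<K}\<times>{..<F}. h i (T i))
           / real (card (PiE ({..<K}\<times>{..<F}) Ch))" by (simp add: eq)
  also have "\<dots> = (\<Prod>i\<in>{..<K}\<times>{..<F}. (\<Sum>c\<in>Ch i. h i c) / real (card (Ch i)))"
    by (rule avg_PiE_prod) (auto simp: fin ne)
  also have "\<dots> = (\<Prod>k'<K. \<Prod>f<F. (\<Sum>c\<in>Ch (k',f). h (k',f) c) / real (card (Ch (k',f))))"
    by (simp add: prod.cartesian_product)
  also have "\<dots> = (\<Prod>k'<K. if k' = k then (\<Prod>f<F. 1 + (exp t - 1) * (if A \<in> Ch (k,f) then 1 / real (card (Ch (k,f))) else 0)) else 1)"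
  proof (intro prod.cong refl)
    fix k' assume "k' \<in> {..<K}"
    show "(\<Prod>f<F. (\<Sum>c\<in>Ch (k',f). h (k',f) c) / real (card (Ch (k',f)))) = (if k' = k then (\<Prod>f<F. 1 + (exp t - 1) * (if A \<in> Ch (k,f) then 1 / real (card (Ch (k,f))) else 0)) else 1)"
    proof (cases "k' = k")
      case False
      have "card (Ch (k',f)) > 0" for f using fin ne by (simp add: card_gt_0_iff)
      then show ?thesis using False by (auto simp: h_def intro!: prod.neutral)
    next
      case True
      have "(\<Prod>f<F. (\<Sum>c\<in>Ch (k,f). h (k,f) c) / real (card (Ch (k,f)))) = (\<Prod>f<F. 1 + (exp t - 1) * (if A \<in> Ch (k,f) then 1 / real (card (Ch (k,f))) else 0))"
      proof (intro prod.cong refl)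
        fix f
        have cp: "card (Ch (k,f)) > 0" using fin ne by (simp add: card_gt_0_iff)
        have "(\<Sum>c\<in>Ch (k,f). h (k,f) c) = (\<Sum>c\<in>Ch (k,f). 1 + (if c = A then exp t - 1 else 0))"
          by (intro sum.cong) (auto simp: h_def)
        also have "\<dots> = real (card (Ch (k,f))) + (if A \<in> Ch (k,f) then exp t - 1 else 0)"
          using fin by (simp add: sum.distrib)
        finally show "(\<Sum>c\<in>Ch (k,f). h (k,f) c) / real (card (Ch (k,f))) = 1 + (exp t - 1) * (if A \<in> Ch (k,f) then 1 / real (card (Ch (k,f))) else 0)"
          using cp by (simp add: field_simps)
      qed
      then show ?thesis using True by simp
    qed
  qed
  also have "\<dots> = (\<Prod>f<F. 1 + (exp t - 1) * (if A \<in> Ch (k,f) then 1 / real (card (Ch (k,f))) else 0))"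
    using k by (simp add: prod.delta)
  finally show ?thesis .
qed

lemma sum_blocks:
  fixes \<phi> :: "nat \<Rightarrow> 'a::comm_monoid_add"
  shows "(\<Sum>f<q*F'. \<phi> f) = (\<Sum>j<F'. \<Sum>r<q. \<phi> (j*q+r))"
proof -
  have "(\<Sum>j<F'. \<Sum>r<q. \<phi> (j*q+r)) = (\<Sum>(j,r)\<in>{..<F'}\<times>{..<q}. \<phi> (j*q+r))"
    by (simp add: sum.cartesian_product)
  also have "\<dots> = (\<Sum>f<q*F'. \<phi> f)"
  proof (rule sum.reindex_bij_witness[of _ "\<lambda>f. (f div q, f mod q)" "\<lambda>(j,r). j*q+r"])
    fix a assume a: "a \<in> {..<F'}\<times>{..<q}"
    then obtain j r where ar: "a = (j,r)" "j < F'" "r < q" by auto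
    then have "j*q+r < q*F'"
    proof -
      have "j*q + r < j*q + q" using ar by simp
      also have "\<dots> = (j+1)*q" by simp
      also have "\<dots> \<le> F' * q" using ar by (intro mult_right_mono) auto
      finally show ?thesis by (simp add: mult.commute)
    qed
    then show "(case a of (j, r) \<Rightarrow> j * q + r) \<in> {..<q * F'}" using ar by simp
    show "((case a of (j, r) \<Rightarrow> j * q + r) div q, (case a of (j, r) \<Rightarrow> j * q + r) mod q) = a"
      using ar by simp
  next
    fix f assume f: "f \<in> {..<q*F'}"
    then have q: "q > 0" by (cases q) auto
    show "(f div q, f mod q) \<in> {..<F'}\<times>{..<q}" using f q
      by (auto simp: less_mult_imp_div_less mult.commute)
    show "(case (f div q, f mod q) of (j, r) \<Rightarrow> j * q + r) = f" by simp
  qed auto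
  finally show ?thesis ..
qed

lemma exp_convex_bound:
  fixes a W :: real
  assumes "0 \<le> W" "W \<le> 1"
  shows "exp (a * W) \<le> 1 + (exp a - 1) * W"
proof -
  have "exp ((1 - W) *\<^sub>R 0 + W *\<^sub>R a) \<le> (1 - W) * exp 0 + W * exp a"
    using assms by (intro convex_onD[OF exp_convex]) auto
  then show ?thesis by (simp add: algebra_simps)
qed

lemma prod_block_bound:
  fixes \<phi> :: "nat \<Rightarrow> real"
  assumes nn: "\<And>f. \<phi> f \<ge> 0" and a: "a \<ge> 0"
    and le1: "\<And>j. j < F' \<Longrightarrow> (\<Sum>r<q. \<phi> (j*q+r)) \<le> 1"
  shows "(\<Prod>f<q*F'. 1 + a * \<phi> f) \<le> (\<Prod>j<F'. 1 + (exp a - 1) * (\<Sum>r<q. \<phi> (j*q+r)))"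
proof -
  have "(\<Prod>f<q*F'. 1 + a * \<phi> f) \<le> (\<Prod>f<q*F'. exp (a * \<phi> f))"
    using nn a by (intro prod_mono) (auto intro: add_nonneg_nonneg)
  also have "\<dots> = exp (\<Sum>f<q*F'. a * \<phi> f)" by (simp add: exp_sum)
  also have "\<dots> = exp (\<Sum>j<F'. a * (\<Sum>r<q. \<phi> (j*q+r)))"
    by (simp add: sum_blocks sum_distrib_left)
  also have "\<dots> = (\<Prod>j<F'. exp (a * (\<Sum>r<q. \<phi> (j*q+r))))" by (simp add: exp_sum)
  also have "\<dots> \<le> (\<Prod>j<F'. 1 + (exp a - 1) * (\<Sum>r<q. \<phi> (j*q+r)))"
    using nn le1 by (intro prod_mono conjI exp_convex_bound) (auto intro: sum_nonneg)
  finally show ?thesis .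
qed

lemma cache_set_block: "r < q \<Longrightarrow> cache_set K q pl n (j*q+r) = {k\<in>{..<K}. pl (k,n,j) = r}"
  unfolding cache_set_def by simp

lemma W_le1:
  fixes x :: "nat \<Rightarrow> nat" and q :: nat
  assumes "A \<noteq> {}"
  shows "(\<Sum>r<q. wA g A {k\<in>{..<K}. x k = r}) \<le> 1"
proof (cases "\<exists>r0<q. wA g A {k\<in>{..<K}. x k = r0} \<noteq> 0")
  case False
  then show ?thesis by simp
next
  case True
  then obtain r0 where r0: "r0 < q" "wA g A {k\<in>{..<K}. x k = r0} \<noteq> 0" by auto
  obtain a where a: "a \<in> A" using assms by auto
  have sub0: "A \<subseteq> {k\<in>{..<K}. x k = r0}" using wA_sub[OF r0(2)] .
  have z: "wA g A {k\<in>{..<K}. x k = r} = 0" if "r \<in> {..<q} - {r0}" for r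
  proof (rule ccontr)
    assume "wA g A {k\<in>{..<K}. x k = r} \<noteq> 0"
    then have "A \<subseteq> {k\<in>{..<K}. x k = r}" by (rule wA_sub)
    then show False using sub0 a that by auto
  qed
  have "(\<Sum>r<q. wA g A {k\<in>{..<K}. x k = r}) = wA g A {k\<in>{..<K}. x k = r0}"
  proof -
    have "(\<Sum>r<q. wA g A {k\<in>{..<K}. x k = r}) = wA g A {k\<in>{..<K}. x k = r0} + (\<Sum>r\<in>{..<q}-{r0}. wA g A {k\<in>{..<K}. x k = r})"
      using r0(1) by (intro sum.remove) auto
    also have "(\<Sum>r\<in>{..<q}-{r0}. wA g A {k\<in>{..<K}. x k = r}) = 0"
      using z by (intro sum.neutral) blast
    finally show ?thesis by simp
  qed
  also have "\<dots> \<le> 1" by (rule wA_le1) simp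
  finally show ?thesis .
qed

lemma block_avg:
  fixes G :: "nat \<Rightarrow> (nat \<Rightarrow> nat) \<Rightarrow> real" and N K F' n q :: nat
  assumes n: "n < N" and q: "q > 0"
  shows "(\<Sum>pl\<in>PiE ({..<K}\<times>{..<N}\<times>{..<F'}) (\<lambda>_. {..<q}). \<Prod>j<F'. G j (\<lambda>k. pl (k,n,j)))
           / real (card (PiE ({..<K}\<times>{..<N}\<times>{..<F'}) (\<lambda>_. {..<q::nat})))
       = (\<Prod>j<F'. (\<Sum>x\<in>PiE {..<K} (\<lambda>_. {..<q}). G j x) / real (card (PiE {..<K} (\<lambda>_. {..<q}))))"
proof -
  define \<Omega> where "\<Omega> = PiE ({..<K}\<times>{..<N}\<times>{..<F'}) (\<lambda>_. {..<q::nat})"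
  define X where "X = PiE {..<K} (\<lambda>_. {..<q::nat})"
  define J where "J = {..<N}\<times>{..<F'}"
  define Y where "Y = PiE J (\<lambda>_. X)"
  define \<Phi> where "\<Phi> = (\<lambda>(y::nat\<times>nat \<Rightarrow> nat \<Rightarrow> nat) (p::nat\<times>nat\<times>nat). case p of (k,m,j) \<Rightarrow> if (m,j)\<in>J then y (m,j) k else undefined)"
  define \<Psi> where "\<Psi> = (\<lambda>(pl::nat\<times>nat\<times>nat\<Rightarrow>nat) (p::nat\<times>nat). case p of (m,j) \<Rightarrow> if (m,j)\<in>J then (\<lambda>k. if k<K then pl (k,m,j) else undefined) else undefined)"
  have reidx: "(\<Sum>pl\<in>\<Omega>. H pl) = (\<Sum>y\<in>Y. H (\<Phi> y))" for H :: "_ \<Rightarrow> real"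
  proof (rule sum.reindex_bij_witness[of _ \<Phi> \<Psi>])
    fix pl assume "pl \<in> \<Omega>"
    then show "\<Phi> (\<Psi> pl) = pl" "\<Psi> pl \<in> Y"
      by (auto simp: \<Omega>_def \<Phi>_def \<Psi>_def J_def Y_def X_def PiE_def extensional_def Pi_def fun_eq_iff)
  next
    fix y assume "y \<in> Y"
    then show "\<Psi> (\<Phi> y) = y" "\<Phi> y \<in> \<Omega>"
      by (auto simp: \<Omega>_def \<Phi>_def \<Psi>_def J_def Y_def X_def PiE_def extensional_def Pi_def fun_eq_iff)
  next
    fix pl assume "pl \<in> \<Omega>"
    then have "\<Phi> (\<Psi> pl) = pl"
      by (auto simp: \<Omega>_def \<Phi>_def \<Psi>_def J_def Y_def X_def PiE_def extensional_def Pi_def fun_eq_iff)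
    then show "H (\<Phi> (\<Psi> pl)) = H pl" by simp
  qed
  have cardeq: "card \<Omega> = card Y" using reidx[of "\<lambda>_. 1"] by simp
  have blk: "(\<lambda>k. \<Phi> y (k,n,j)) = y (n,j)" if "y \<in> Y" "j < F'" for y j
    using that n by (auto simp: \<Phi>_def Y_def J_def X_def PiE_def extensional_def fun_eq_iff)
  define h where "h = (\<lambda>(i::nat\<times>nat) x. if fst i = n then G (snd i) x else 1)"
  have pr: "(\<Prod>j<F'. G j (y (n,j))) = (\<Prod>i\<in>J. h i (y i))" for y
  proof -
    have "(\<Prod>i\<in>J. h i (y i)) = (\<Prod>n'<N. \<Prod>j<F'. h (n',j) (y (n',j)))"
      by (simp add: J_def prod.cartesian_product)
    also have "\<dots> = (\<Prod>n'<N. if n' = n then (\<Prod>j<F'. G j (y (n,j))) else 1)"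
      by (intro prod.cong) (auto simp: h_def)
    also have "\<dots> = (\<Prod>j<F'. G j (y (n,j)))" using n by (simp add: prod.delta)
    finally show ?thesis ..
  qed
  have "(\<Sum>pl\<in>\<Omega>. \<Prod>j<F'. G j (\<lambda>k. pl (k,n,j))) = (\<Sum>y\<in>Y. \<Prod>j<F'. G j (\<lambda>k. \<Phi> y (k,n,j)))"
    by (rule reidx)
  also have "\<dots> = (\<Sum>y\<in>Y. \<Prod>i\<in>J. h i (y i))"
    by (intro sum.cong refl) (simp add: blk pr)
  finally have "(\<Sum>pl\<in>\<Omega>. \<Prod>j<F'. G j (\<lambda>k. pl (k,n,j))) / real (card \<Omega>)
      = (\<Sum>y\<in>Y. \<Prod>i\<in>J. h i (y i)) / real (card Y)" by (simp add: cardeq)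
  also have "\<dots> = (\<Prod>i\<in>J. (\<Sum>x\<in>X. h i x) / real (card X))"
    unfolding Y_def using q by (intro avg_PiE_prod) (auto simp: J_def X_def PiE_eq_empty_iff intro!: finite_PiE)
  also have "\<dots> = (\<Prod>n'<N. \<Prod>j<F'. (\<Sum>x\<in>X. h (n',j) x) / real (card X))"
    by (simp add: J_def prod.cartesian_product)
  also have "\<dots> = (\<Prod>n'<N. if n' = n then (\<Prod>j<F'. (\<Sum>x\<in>X. G j x) / real (card X)) else 1)"
  proof (intro prod.cong refl)
    fix n' assume "n' \<in> {..<N}"
    have cX: "card X > 0" using q by (simp add: X_def card_PiE)
    show "(\<Prod>j<F'. (\<Sum>x\<in>X. h (n',j) x) / real (card X)) = (if n' = n then (\<Prod>j<F'. (\<Sum>x\<in>X. G j x) / real (card X)) else 1)"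
      using cX by (auto simp: h_def)
  qed
  also have "\<dots> = (\<Prod>j<F'. (\<Sum>x\<in>X. G j x) / real (card X))" using n by (simp add: prod.delta)
  finally show ?thesis unfolding \<Omega>_def X_def .
qed

lemma perm_exists:
  assumes U: "finite U" and A: "A \<subseteq> U" and A': "A' \<subseteq> U" and c: "card A = card A'"
  shows "\<exists>\<pi>. bij_betw \<pi> U U \<and> \<pi> ` A = A'"
proof -
  have fA: "finite A" "finite A'" using U A A' finite_subset by auto
  obtain f where f: "bij_betw f A A'" using finite_same_card_bij[OF fA c] by auto
  have "card (U - A) = card (U - A')" using U A A' c fA by (simp add: card_Diff_subset)
  then obtain h where h: "bij_betw h (U - A) (U - A')"
    using finite_same_card_bij[of "U - A" "U - A'"] U by auto
  define \<pi> where "\<pi> = (\<lambda>x. if x \<in> A then f x else h x)"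
  have b1: "bij_betw \<pi> A A'" using f by (rule bij_betw_cong[THEN iffD1, rotated]) (simp add: \<pi>_def)
  have b2: "bij_betw \<pi> (U - A) (U - A')" using h by (rule bij_betw_cong[THEN iffD1, rotated]) (simp add: \<pi>_def)
  have "bij_betw \<pi> (A \<union> (U - A)) (A' \<union> (U - A'))"
    by (rule bij_betw_combine[OF b1 b2]) auto
  moreover have "A \<union> (U - A) = U" "A' \<union> (U - A') = U" using A A' by auto
  ultimately have "bij_betw \<pi> U U" by simp
  moreover have "\<pi> ` A = A'" using b1 by (simp add: bij_betw_def)
  ultimately show ?thesis by blast
qed

lemma wA_perm:
  assumes b: "bij_betw \<pi> U U" and U: "finite U" and A: "A \<subseteq> U" and S: "S \<subseteq> U"
  shows "wA g (\<pi> ` A) (\<pi> ` S) = wA g A S"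
proof -
  have inj: "inj_on \<pi> U" using b by (simp add: bij_betw_def)
  have fS: "finite S" using U S finite_subset by auto
  have cS: "card (\<pi> ` S) = card S" using inj S by (simp add: card_image inj_on_subset)
  have cA: "card (\<pi> ` A) = card A" using inj A by (simp add: card_image inj_on_subset)
  have sub: "\<pi> ` A \<subseteq> \<pi> ` S \<longleftrightarrow> A \<subseteq> S" using inj A S by (simp add: inj_on_image_subset_iff)
  have eq: "\<pi> ` A = \<pi> ` S \<longleftrightarrow> A = S" using inj A S by (simp add: inj_on_image_eq_iff)
  show ?thesis using fS by (simp add: wA_closed cS cA sub eq)
qed

lemma sym_sum:
  fixes K q r :: nat
  assumes A: "A \<subseteq> {..<K}" and A': "A' \<subseteq> {..<K}" and c: "card A = card A'"
  shows "(\<Sum>x\<in>PiE {..<K} (\<lambda>_. {..<q}). wA g A' {k\<in>{..<K}. x k = r})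
       = (\<Sum>x\<in>PiE {..<K} (\<lambda>_. {..<q}). wA g A {k\<in>{..<K}. x k = r})"
proof -
  define X where "X = PiE {..<K} (\<lambda>_. {..<q})"
  obtain \<pi> where \<pi>: "bij_betw \<pi> {..<K} {..<K}" "\<pi> ` A = A'"
    using perm_exists[OF _ A A' c] by auto
  define \<sigma> where "\<sigma> = (\<lambda>x::nat\<Rightarrow>nat. restrict (x \<circ> \<pi>) {..<K})"
  have into: "\<sigma> ` X \<subseteq> X" using \<pi>(1) by (auto simp: \<sigma>_def X_def bij_betw_def PiE_def Pi_def) (metis image_eqI lessThan_iff)
  have inj: "inj_on \<sigma> X"
  proof (rule inj_onI)
    fix x y assume xy: "x \<in> X" "y \<in> X" "\<sigma> x = \<sigma> y"
    have "x k = y k" for k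
    proof (cases "k < K")
      case True
      then obtain k' where "k' < K" "\<pi> k' = k" using \<pi>(1) by (auto simp: bij_betw_def image_iff) (metis imageE lessThan_iff)
      then show ?thesis using fun_cong[OF xy(3), of k'] by (simp add: \<sigma>_def)
    next
      case False
      then show ?thesis using xy(1,2) by (auto simp: X_def PiE_def extensional_def)
    qed
    then show "x = y" by auto
  qed
  have img: "\<sigma> ` X = X" by (rule endo_inj_surj[OF _ into inj]) (simp add: X_def finite_PiE)
  have Seq: "\<pi> ` {k\<in>{..<K}. \<sigma> x k = r} = {k\<in>{..<K}. x k = r}" for x
  proof -
    have "{k\<in>{..<K}. \<sigma> x k = r} = {k\<in>{..<K}. x (\<pi> k) = r}" by (auto simp: \<sigma>_def)
    moreover have "\<pi> ` {k\<in>{..<K}. x (\<pi> k) = r} = {k\<in>{..<K}. x k = r}"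
      using \<pi>(1) by (auto simp: bij_betw_def)
    ultimately show ?thesis by simp
  qed
  have "(\<Sum>x\<in>X. wA g A {k\<in>{..<K}. x k = r}) = (\<Sum>x\<in>\<sigma> ` X. wA g A {k\<in>{..<K}. x k = r})"
    by (simp add: img)
  also have "\<dots> = (\<Sum>x\<in>X. wA g A {k\<in>{..<K}. \<sigma> x k = r})"
    by (simp add: sum.reindex[OF inj])
  also have "\<dots> = (\<Sum>x\<in>X. wA g A' {k\<in>{..<K}. x k = r})"
  proof (intro sum.cong refl)
    fix x
    have "wA g A {k\<in>{..<K}. \<sigma> x k = r} = wA g (\<pi> ` A) (\<pi> ` {k\<in>{..<K}. \<sigma> x k = r})"
      by (rule wA_perm[OF \<pi>(1), symmetric]) (use A in auto)
    then show "wA g A {k\<in>{..<K}. \<sigma> x k = r} = wA g A' {k\<in>{..<K}. x k = r}"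
      using Seq[of x] \<pi>(2) by simp
  qed
  finally show ?thesis unfolding X_def ..
qed

lemma sum_wA_le1:
  fixes K :: nat
  assumes S: "S \<subseteq> {..<K}"
  shows "(\<Sum>A'\<in>{B. B \<subseteq> {..<K} \<and> card B = g}. wA g A' S) \<le> 1"
proof -
  have fS: "finite S" using S finite_subset by auto
  have fin: "finite {B. B \<subseteq> {..<K} \<and> card B = g}" by (rule finite_subset[of _ "Pow {..<K}"]) auto
  show ?thesis
  proof (cases "g + 1 \<le> card S")
    case True
    have "(\<Sum>A'\<in>{B. B \<subseteq> {..<K} \<and> card B = g}. wA g A' S)
        = (\<Sum>A'\<in>{B. B \<subseteq> {..<K} \<and> card B = g}. if A' \<in> {B. B \<subseteq> S \<and> card B = g} then 1 / real (card S choose g) else 0)"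
      using True fS by (intro sum.cong refl) (simp add: wA_closed)
    also have "\<dots> = (\<Sum>A'\<in>{B. B \<subseteq> {..<K} \<and> card B = g} \<inter> {B. B \<subseteq> S \<and> card B = g}. 1 / real (card S choose g))"
      using fin by (subst sum.If_cases) auto
    also have "{B. B \<subseteq> {..<K} \<and> card B = g} \<inter> {B. B \<subseteq> S \<and> card B = g} = {B. B \<subseteq> S \<and> card B = g}"
      using S by auto
    also have "(\<Sum>A'\<in>{B. B \<subseteq> S \<and> card B = g}. 1 / real (card S choose g)) = 1"
      using True fS by (simp add: n_subsets)
    finally show ?thesis by simp
  next
    case False
    have "(\<Sum>A'\<in>{B. B \<subseteq> {..<K} \<and> card B = g}. wA g A' S)
        = (\<Sum>A'\<in>{B. B \<subseteq> {..<K} \<and> card B = g}. if A' = S then 1 else 0)"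
      using False fS by (intro sum.cong refl) (simp add: wA_closed)
    also have "\<dots> \<le> 1" using fin by (simp add: sum.delta')
    finally show ?thesis .
  qed
qed

lemma mA_bound:
  fixes K q r :: nat
  assumes A: "A \<subseteq> {..<K}" "card A = g" and q: "q > 0" and gK: "g \<le> K"
  shows "(\<Sum>x\<in>PiE {..<K} (\<lambda>_. {..<q}). wA g A {k\<in>{..<K}. x k = r}) / real (card (PiE {..<K} (\<lambda>_. {..<q::nat})))
         \<le> 1 / real (K choose g)"
proof -
  define X where "X = PiE {..<K} (\<lambda>_. {..<q})"
  define \<A> where "\<A> = {B. B \<subseteq> {..<K} \<and> card B = g}"
  have cA: "card \<A> = K choose g" unfolding \<A>_def using n_subsets[of "{..<K}" g] by simp
  have Cpos: "real (K choose g) > 0" using gK by simp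
  have cX: "real (card X) > 0" using q by (simp add: X_def card_PiE)
  have finX: "finite X" by (simp add: X_def finite_PiE)
  have finA: "finite \<A>" unfolding \<A>_def by (rule finite_subset[of _ "Pow {..<K}"]) auto
  have "real (K choose g) * (\<Sum>x\<in>X. wA g A {k\<in>{..<K}. x k = r})
      = (\<Sum>A'\<in>\<A>. \<Sum>x\<in>X. wA g A {k\<in>{..<K}. x k = r})" by (simp add: cA)
  also have "\<dots> = (\<Sum>A'\<in>\<A>. \<Sum>x\<in>X. wA g A' {k\<in>{..<K}. x k = r})"
    unfolding X_def using A by (intro sum.cong refl sym_sum[symmetric]) (auto simp: \<A>_def)
  also have "\<dots> = (\<Sum>x\<in>X. \<Sum>A'\<in>\<A>. wA g A' {k\<in>{..<K}. x k = r})" by (rule sum.swap)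
  also have "\<dots> \<le> (\<Sum>x\<in>X. 1)" unfolding \<A>_def by (intro sum_mono sum_wA_le1) auto
  also have "\<dots> = real (card X)" by simp
  finally have "real (K choose g) * (\<Sum>x\<in>X. wA g A {k\<in>{..<K}. x k = r}) \<le> real (card X)" .
  then show ?thesis unfolding X_def[symmetric] using Cpos cX by (simp add: field_simps)
qed

lemma tail_bound:
  fixes K q r g :: nat
  assumes q: "q > 0" and g: "g \<ge> 1" and r: "r < q"
  shows "(\<Sum>x\<in>PiE {..<K} (\<lambda>_. {..<q}). if card {k\<in>{..<K}. x k = r} < g then 1 else 0) / real (card (PiE {..<K} (\<lambda>_. {..<q::nat})))
         \<le> exp (real g - 1 - real K * (1 - exp (-1)) / real q)"
proof -
  define X where "X = PiE {..<K} (\<lambda>_. {..<q})"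
  have cX: "real (card X) > 0" using q by (simp add: X_def card_PiE)
  have pt: "(if card {k\<in>{..<K}. x k = r} < g then 1 else 0) \<le> exp (real g - 1) * (\<Prod>k<K. if x k = r then exp (-1) else 1)" for x
  proof -
    have e: "(\<Prod>k<K. if x k = r then exp (-1) else 1) = exp (-1 * real (card {k\<in>{..<K}. x k = r}))"
      by (rule exp_card_prod[symmetric])
    have "(if card {k\<in>{..<K}. x k = r} < g then 1 else 0) \<le> exp (real g - 1 - real (card {k\<in>{..<K}. x k = r}))"
      using g by (auto simp: of_nat_less_iff[symmetric] simp del: of_nat_less_iff)
    also have "\<dots> = exp (real g - 1) * exp (-1 * real (card {k\<in>{..<K}. x k = r}))"
      by (simp add: exp_add[symmetric])
    finally show ?thesis unfolding e .
  qed
  have "(\<Sum>x\<in>X. if card {k\<in>{..<K}. x k = r} < g then 1 else 0) / real (card X)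
      \<le> (\<Sum>x\<in>X. exp (real g - 1) * (\<Prod>k<K. if x k = r then exp (-1) else 1)) / real (card X)"
    using cX by (intro divide_right_mono sum_mono pt) auto
  also have "\<dots> = exp (real g - 1) * ((\<Sum>x\<in>X. \<Prod>k<K. if x k = r then exp (-1) else 1) / real (card X))"
    by (simp add: sum_distrib_left)
  also have "(\<Sum>x\<in>X. \<Prod>k<K. if x k = r then exp (-1) else 1) / real (card X)
       = (\<Prod>k<K. (\<Sum>a<q. if a = r then exp (-1) else 1) / real (card {..<q}))"
    unfolding X_def using q by (intro avg_PiE_prod) auto
  also have "\<dots> \<le> exp (- real K * (1 - exp (-1)) / real q)"
  proof -
    have "(\<Sum>a<q. if a = r then exp (-1) else 1) = (\<Sum>a<q. 1 + (if a = r then exp (-1) - 1 else 0))"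
      by (intro sum.cong) auto
    also have "\<dots> = real q + (exp (-1) - 1)" using r by (simp add: sum.distrib)
    finally have "(\<Sum>a<q. if a = r then exp (-1) else 1) / real (card {..<q}) = 1 + (- (1 - exp (-1)) / real q)"
      using q by (simp add: field_simps)
    then have "(\<Prod>k<K. (\<Sum>a<q. if a = r then exp (-1) else 1) / real (card {..<q})) = (1 + (- (1 - exp (-1)) / real q)) ^ K"
      by simp
    also have "\<dots> \<le> exp (- (1 - exp (-1)) / real q) ^ K"
    proof (rule power_mono)
      have "1 - exp (-1) \<le> (1::real)" by simp
      moreover have "real q \<ge> 1" using q by simp
      ultimately have h: "1 - exp (-1) \<le> real q" by linarith
      have "(1 - exp (- 1)) / real q \<le> 1" using h q by (simp add: divide_le_eq_1)
      then show "0 \<le> 1 + - (1 - exp (- 1)) / real q" by (smt (verit) minus_divide_left)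
    qed simp
    also have "\<dots> = exp (- real K * (1 - exp (-1)) / real q)"
      by (simp add: exp_of_nat_mult[symmetric] field_simps)
    finally show ?thesis .
  qed
  finally show ?thesis unfolding X_def
    by (simp add: mult.assoc[symmetric] exp_add[symmetric] mult_left_mono)
qed

definition avg :: "'a set \<Rightarrow> ('a \<Rightarrow> real) \<Rightarrow> real" where
  "avg A f = (\<Sum>x\<in>A. f x) / real (card A)"

lemma avg_mono: "(\<And>x. x \<in> A \<Longrightarrow> f x \<le> h x) \<Longrightarrow> avg A f \<le> avg A h"
  unfolding avg_def by (intro divide_right_mono sum_mono) auto

lemma avg_add: "avg A (\<lambda>x. f x + h x) = avg A f + avg A h"
  unfolding avg_def by (simp add: sum.distrib add_divide_distrib)

lemma avg_sum: "avg A (\<lambda>x. \<Sum>i\<in>I. f i x) = (\<Sum>i\<in>I. avg A (f i))"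
  unfolding avg_def by (simp add: sum.swap[of _ A] sum_divide_distrib)

lemma avg_cmult: "avg A (\<lambda>x. c * f x) = c * avg A f"
  unfolding avg_def by (simp add: sum_distrib_left)

lemma avg_const: "finite A \<Longrightarrow> A \<noteq> {} \<Longrightarrow> avg A (\<lambda>_. c) = c"
  unfolding avg_def by simp

lemma max_softmax:
  fixes x :: "'a \<Rightarrow> nat"
  assumes "finite S" "S \<noteq> {}" "t > 0" "B > 0"
  shows "real (Max (x ` S)) \<le> (ln B - 1 + (\<Sum>k\<in>S. exp (t * real (x k))) / B) / t"
proof -
  have "Max (x ` S) \<in> x ` S" using assms by (intro Max_in) auto
  then obtain k0 where k0: "k0 \<in> S" "Max (x ` S) = x k0" by auto
  have "exp (t * real (x k0)) \<le> (\<Sum>k\<in>S. exp (t * real (x k)))"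
    using k0 assms by (intro member_le_sum) auto
  moreover have "ln (exp (t * real (x k0)) / B) \<le> exp (t * real (x k0)) / B - 1"
    using assms by (intro ln_le_minus_one) auto
  moreover have "ln (exp (t * real (x k0)) / B) = t * real (x k0) - ln B"
    using assms by (simp add: ln_div)
  ultimately have "t * real (x k0) \<le> ln B - 1 + (\<Sum>k\<in>S. exp (t * real (x k))) / B"
    using assms by (smt (verit) divide_right_mono)
  then show ?thesis using k0 assms by (simp add: field_simps)
qed

lemma card_filter_sum: "finite A \<Longrightarrow> real (card {x\<in>A. P x}) = (\<Sum>x\<in>A. if P x then 1 else 0)"
  using sum.inter_filter[of A "\<lambda>_. 1::real" P] by simp

lemma cache_set_sub: "cache_set K q pl n f \<subseteq> {..<K}"
  unfolding cache_set_def by auto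

lemma cache_set_fin: "finite (cache_set K q pl n f)"
  by (rule finite_subset[OF cache_set_sub]) simp

lemma rate_decomp:
  fixes T :: "nat \<times> nat \<Rightarrow> nat set" and d :: "nat \<Rightarrow> nat"
  assumes Tch: "\<And>k f. k < K \<Longrightarrow> f < F \<Longrightarrow> T (k,f) \<in> pulldown_choices g (cache_set K q pl (d k) f)"
  shows "rate_md K F T \<le>
     (\<Sum>S\<in>{S. S \<subseteq> {..<K} \<and> card S = g+1}. real (Max ((\<lambda>k. card (Vset F T k (S - {k}))) ` S))) / real F
     + (\<Sum>k<K. real (card {f\<in>{..<F}. card (cache_set K q pl (d k) f) < g})) / real F"
proof -
  define P where "P = Pow {..<K} - {{}}"
  define M where "M = (\<lambda>S. real (Max ((\<lambda>k. card (Vset F T k (S - {k}))) ` S)))"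
  define h where "h = (\<lambda>S k. real (card (Vset F T k (S - {k}))))"
  define Q where "Q = {S\<in>P. card S \<le> g}"
  have finP: "finite P" unfolding P_def by simp
  have cardT: "card (T (k,f)) \<le> g \<and> (card (T (k,f)) < g \<longrightarrow> card (cache_set K q pl (d k) f) < g)"
    if "k < K" "f < F" for k f
    using pc_mem[OF Tch[OF that]] by auto
  have pt: "M S \<le> (if card S = g+1 then M S else 0) + (if card S \<le> g then (\<Sum>k\<in>S. h S k) else 0)"
    if S: "S \<in> P" for S
  proof -
    have fS3: "S \<subseteq> {..<K}" "S \<noteq> {}" using S unfolding P_def by auto
    have fS: "finite S" "S \<noteq> {}" "S \<subseteq> {..<K}" using fS3 finite_subset[OF fS3(1)] by auto
    show ?thesis
    proof (cases "card S \<le> g")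
      case True
      have "Max ((\<lambda>k. card (Vset F T k (S - {k}))) ` S) \<in> (\<lambda>k. card (Vset F T k (S - {k}))) ` S"
        using fS by (intro Max_in) auto
      then obtain k0 where k0: "k0 \<in> S" "M S = h S k0" unfolding M_def h_def by auto
      have "h S k0 \<le> (\<Sum>k\<in>S. h S k)" using k0 fS by (intro member_le_sum) (auto simp: h_def)
      then show ?thesis using True k0 by simp
    next
      case False
      show ?thesis
      proof (cases "card S = g+1")
        case True then show ?thesis by simp
      next
        case c: False
        have "Vset F T k (S - {k}) = {}" if "k \<in> S" for k
        proof (rule ccontr)
          assume "Vset F T k (S - {k}) \<noteq> {}"
          then obtain f where f: "f < F" "T (k,f) = S - {k}" unfolding Vset_def by auto
          have "card (S - {k}) = card S - 1" using that fS by simp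
          moreover have "card S \<ge> g + 2" using False c by simp
          moreover have "k < K" using that fS by auto
          ultimately show False using cardT[of k f] f by simp
        qed
        then have "(\<lambda>k. card (Vset F T k (S - {k}))) ` S = {0}" using fS by auto
        then have "M S = 0" unfolding M_def by simp
        then show ?thesis using False c by simp
      qed
    qed
  qed
  have "(\<Sum>S\<in>P. M S) \<le> (\<Sum>S\<in>P. (if card S = g+1 then M S else 0) + (if card S \<le> g then (\<Sum>k\<in>S. h S k) else 0))"
    by (intro sum_mono pt)
  also have "\<dots> = (\<Sum>S\<in>{S\<in>P. card S = g+1}. M S) + (\<Sum>S\<in>Q. \<Sum>k\<in>S. h S k)"
    unfolding Q_def using finP by (simp add: sum.distrib sum.inter_filter)
  also have "{S\<in>P. card S = g+1} = {S. S \<subseteq> {..<K} \<and> card S = g+1}"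
    unfolding P_def by auto
  also have "(\<Sum>S\<in>Q. \<Sum>k\<in>S. h S k) \<le> (\<Sum>k<K. real (card {f\<in>{..<F}. card (cache_set K q pl (d k) f) < g}))"
  proof -
    have finQ: "finite Q" unfolding Q_def using finP by simp
    have "(\<Sum>S\<in>Q. \<Sum>k\<in>S. h S k) = (\<Sum>S\<in>Q. \<Sum>k<K. if k \<in> S then h S k else 0)"
    proof (rule sum.cong[OF refl])
      fix S assume "S \<in> Q"
      then have "S \<subseteq> {..<K}" unfolding Q_def P_def by auto
      then have e: "{k\<in>{..<K}. k \<in> S} = S" by blast
      have "(\<Sum>k<K. if k \<in> S then h S k else 0) = sum (h S) {k\<in>{..<K}. k \<in> S}"
        by (rule sum.inter_filter[symmetric]) simp
      then show "(\<Sum>k\<in>S. h S k) = (\<Sum>k<K. if k \<in> S then h S k else 0)"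
        by (simp only: e)
    qed
    also have "\<dots> = (\<Sum>k<K. \<Sum>S\<in>Q. if k \<in> S then h S k else 0)" by (rule sum.swap)
    also have "\<dots> \<le> (\<Sum>k<K. real (card {f\<in>{..<F}. card (cache_set K q pl (d k) f) < g}))"
    proof (intro sum_mono)
      fix k assume k: "k \<in> {..<K}"
      have "(\<Sum>S\<in>Q. if k \<in> S then h S k else 0)
          = (\<Sum>S\<in>Q. \<Sum>f<F. if k \<in> S \<and> T (k,f) = S - {k} then 1 else 0)"
      proof (rule sum.cong[OF refl])
        fix S assume "S \<in> Q"
        show "(if k \<in> S then h S k else 0) = (\<Sum>f<F. if k \<in> S \<and> T (k,f) = S - {k} then 1 else 0)"
        proof (cases "k \<in> S")
          case True
          then show ?thesis unfolding h_def Vset_def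
            using card_filter_sum[of "{..<F}" "\<lambda>f. T (k,f) = S - {k}"] by simp
        qed simp
      qed
      also have "\<dots> = (\<Sum>f<F. \<Sum>S\<in>Q. if k \<in> S \<and> T (k,f) = S - {k} then 1 else 0)"
        by (rule sum.swap)
      also have "\<dots> \<le> (\<Sum>f<F. if card (cache_set K q pl (d k) f) < g then 1 else 0)"
      proof (intro sum_mono)
        fix f assume f: "f \<in> {..<F}"
        have "(\<Sum>S\<in>Q. if k \<in> S \<and> T (k,f) = S - {k} then 1 else (0::real))
            = real (card {S\<in>Q. k \<in> S \<and> T (k,f) = S - {k}})"
          using card_filter_sum[OF finQ, of "\<lambda>S. k \<in> S \<and> T (k,f) = S - {k}"] by simp
        also have "\<dots> \<le> (if card (cache_set K q pl (d k) f) < g then 1 else 0)"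
        proof (cases "{S\<in>Q. k \<in> S \<and> T (k,f) = S - {k}} = {}")
          case True then show ?thesis by (subst True) simp
        next
          case False
          then obtain S where S: "S \<in> Q" "k \<in> S" "T (k,f) = S - {k}" by auto
          have sub: "S \<subseteq> {..<K}" using S(1) unfolding Q_def P_def by auto
          have fS: "finite S" by (rule finite_subset[OF sub]) simp
          have cS: "card S \<le> g" using S(1) unfolding Q_def by simp
          have "card (T (k,f)) = card S - 1" using S(2,3) fS by (simp add: card_Diff_singleton)
          moreover have "card S \<ge> 1" using S(2) fS by (metis One_nat_def Suc_leI card_gt_0_iff empty_iff)
          ultimately have "card (T (k,f)) < g" using cS by linarith
          then have lt: "card (cache_set K q pl (d k) f) < g" using cardT[of k f] k f by auto
          have "{S\<in>Q. k \<in> S \<and> T (k,f) = S - {k}} \<subseteq> {insert k (T (k,f))}"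
            by (auto simp: insert_absorb)
          then have "card {S\<in>Q. k \<in> S \<and> T (k,f) = S - {k}} \<le> 1"
            using card_mono[of "{insert k (T (k,f))}"] by simp
          then show ?thesis using lt by simp
        qed
        finally show "(\<Sum>S\<in>Q. if k \<in> S \<and> T (k,f) = S - {k} then 1 else (0::real))
            \<le> (if card (cache_set K q pl (d k) f) < g then 1 else 0)" .
      qed
      also have "\<dots> = real (card {f\<in>{..<F}. card (cache_set K q pl (d k) f) < g})"
        using card_filter_sum[of "{..<F}" "\<lambda>f. card (cache_set K q pl (d k) f) < g"] by simp
      finally show "(\<Sum>S\<in>Q. if k \<in> S then h S k else 0) \<le> real (card {f\<in>{..<F}. card (cache_set K q pl (d k) f) < g})" .
    qed
    finally show ?thesis .
  qed
  finally have num: "(\<Sum>S\<in>P. M S) \<le> (\<Sum>S\<in>{S. S \<subseteq> {..<K} \<and> card S = g+1}. M S)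
       + (\<Sum>k<K. real (card {f\<in>{..<F}. card (cache_set K q pl (d k) f) < g}))" by simp
  have "rate_md K F T = (\<Sum>S\<in>P. M S) / real F"
    unfolding rate_md_def P_def M_def by (simp add: sum_divide_distrib)
  also have "\<dots> \<le> ((\<Sum>S\<in>{S. S \<subseteq> {..<K} \<and> card S = g+1}. M S)
       + (\<Sum>k<K. real (card {f\<in>{..<F}. card (cache_set K q pl (d k) f) < g}))) / real F"
    using num by (intro divide_right_mono) auto
  finally show ?thesis unfolding M_def by (simp add: add_divide_distrib)
qed

lemma OmT_fin: "finite (PiE ({..<K}\<times>{..<F}) (\<lambda>(k,f). pulldown_choices g (cache_set K q pl (d k) f)))"
  by (intro finite_PiE) (auto intro: pc_finite cache_set_fin)

lemma OmT_ne: "PiE ({..<K}\<times>{..<F}) (\<lambda>(k,f). pulldown_choices g (cache_set K q pl (d k) f)) \<noteq> {}"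
  using pc_nonempty[OF cache_set_fin] by (auto simp: PiE_eq_empty_iff)

lemma cond_mgf:
  fixes K q F' g :: nat and d :: "nat \<Rightarrow> nat" and pl :: placement
  assumes k: "k < K" and A: "A \<noteq> {}" and t: "t \<ge> 0"
  shows "avg (PiE ({..<K}\<times>{..<q*F'}) (\<lambda>(k,f). pulldown_choices g (cache_set K q pl (d k) f)))
            (\<lambda>T. exp (t * real (card (Vset (q*F') T k A))))
         \<le> (\<Prod>j<F'. 1 + (exp (exp t - 1) - 1) * (\<Sum>r<q. wA g A {k'\<in>{..<K}. pl (k', d k, j) = r}))"
proof -
  define Ch where "Ch = (\<lambda>(k,f). pulldown_choices g (cache_set K q pl (d k) f))"
  have "avg (PiE ({..<K}\<times>{..<q*F'}) Ch) (\<lambda>T. exp (t * real (card (Vset (q*F') T k A))))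
      = (\<Prod>f<q*F'. 1 + (exp t - 1) * (if A \<in> Ch (k,f) then 1 / real (card (Ch (k,f))) else 0))"
    unfolding avg_def using pc_nonempty[OF cache_set_fin]
    by (intro avg_one_coord) (auto simp: Ch_def intro: pc_finite cache_set_fin k)
  also have "\<dots> = (\<Prod>f<q*F'. 1 + (exp t - 1) * wA g A (cache_set K q pl (d k) f))"
    unfolding Ch_def by (simp add: wA_def cong: if_cong)
  also have "\<dots> \<le> (\<Prod>j<F'. 1 + (exp (exp t - 1) - 1) * (\<Sum>r<q. wA g A (cache_set K q pl (d k) (j*q+r))))"
  proof (rule prod_block_bound)
    show "0 \<le> exp t - 1" using t by simp
    fix j
    have "(\<Sum>r<q. wA g A (cache_set K q pl (d k) (j*q+r))) = (\<Sum>r<q. wA g A {k'\<in>{..<K}. pl (k', d k, j) = r})"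
      by (intro sum.cong refl) (simp add: cache_set_block)
    also have "\<dots> \<le> 1" by (rule W_le1[OF A])
    finally show "(\<Sum>r<q. wA g A (cache_set K q pl (d k) (j*q+r))) \<le> 1" .
  qed (rule wA_nonneg)
  also have "\<dots> = (\<Prod>j<F'. 1 + (exp (exp t - 1) - 1) * (\<Sum>r<q. wA g A {k'\<in>{..<K}. pl (k', d k, j) = r}))"
    by (intro prod.cong refl arg_cong2[where f="(+)"] arg_cong2[where f="(*)"] sum.cong) (simp_all add: cache_set_block)
  finally show ?thesis unfolding Ch_def .
qed

lemma block_mgf:
  fixes K N q F' g n :: nat
  assumes n: "n < N" and A: "A \<subseteq> {..<K}" "card A = g" and q: "q > 0" and gK: "g \<le> K" and a: "a \<ge> 0"
  shows "avg (PiE ({..<K}\<times>{..<N}\<times>{..<F'}) (\<lambda>_. {..<q}))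
           (\<lambda>pl. \<Prod>j<F'. 1 + a * (\<Sum>r<q. wA g A {k'\<in>{..<K}. pl (k', n, j) = r}))
         \<le> (1 + a * real q / real (K choose g)) ^ F'"
proof -
  define X where "X = PiE {..<K} (\<lambda>_. {..<q})"
  define G where "G = (\<lambda>(j::nat) x. 1 + a * (\<Sum>r<q. wA g A {k'\<in>{..<K}. x k' = r}))"
  have "avg (PiE ({..<K}\<times>{..<N}\<times>{..<F'}) (\<lambda>_. {..<q}))
           (\<lambda>pl. \<Prod>j<F'. 1 + a * (\<Sum>r<q. wA g A {k'\<in>{..<K}. pl (k', n, j) = r}))
      = (\<Prod>j<F'. avg X (G j))"
    unfolding avg_def X_def G_def by (rule block_avg[OF n q])
  also have "\<dots> \<le> (\<Prod>j<F'. 1 + a * real q / real (K choose g))"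
  proof (intro prod_mono conjI)
    fix j
    have finX: "finite X" "X \<noteq> {}" using q by (auto simp: X_def PiE_eq_empty_iff intro!: finite_PiE)
    have "avg X (G j) = 1 + a * (\<Sum>r<q. avg X (\<lambda>x. wA g A {k'\<in>{..<K}. x k' = r}))"
      unfolding G_def by (simp add: avg_add avg_cmult avg_sum avg_const[OF finX])
    also have "\<dots> \<le> 1 + a * (\<Sum>r<q. 1 / real (K choose g))"
      using a mA_bound[OF A q gK] by (intro add_left_mono mult_left_mono sum_mono)
        (auto simp: avg_def X_def)
    also have "\<dots> = 1 + a * real q / real (K choose g)" by simp
    finally show "avg X (G j) \<le> 1 + a * real q / real (K choose g)" .
    show "0 \<le> avg X (G j)" unfolding avg_def G_def using a
      by (intro divide_nonneg_nonneg sum_nonneg add_nonneg_nonneg mult_nonneg_nonneg) (auto intro: wA_nonneg)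
  qed
  also have "\<dots> = (1 + a * real q / real (K choose g)) ^ F'" by simp
  finally show ?thesis .
qed

lemma single_block_tail:
  fixes K N q F' g n j r :: nat
  assumes n: "n < N" and j: "j < F'" and q: "q > 0" and g: "g \<ge> 1" and r: "r < q"
  shows "avg (PiE ({..<K}\<times>{..<N}\<times>{..<F'}) (\<lambda>_. {..<q}))
           (\<lambda>pl. if card {k'\<in>{..<K}. pl (k', n, j) = r} < g then 1 else 0)
         \<le> exp (real g - 1 - real K * (1 - exp (-1)) / real q)"
proof -
  define X where "X = PiE {..<K} (\<lambda>_. {..<q})"
  define G where "G = (\<lambda>(j'::nat) (x::nat\<Rightarrow>nat). if j' = j then (if card {k'\<in>{..<K}. x k' = r} < g then 1 else 0) else (1::real))"
  have finX: "finite X" "X \<noteq> {}" using q by (auto simp: X_def PiE_eq_empty_iff intro!: finite_PiE)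
  have "avg (PiE ({..<K}\<times>{..<N}\<times>{..<F'}) (\<lambda>_. {..<q}))
           (\<lambda>pl. if card {k'\<in>{..<K}. pl (k', n, j) = r} < g then 1 else 0)
      = avg (PiE ({..<K}\<times>{..<N}\<times>{..<F'}) (\<lambda>_. {..<q})) (\<lambda>pl. \<Prod>j'<F'. G j' (\<lambda>k. pl (k,n,j')))"
  proof -
    have "(\<Prod>j'<F'. G j' (\<lambda>k. pl (k,n,j'))) = (if card {k'\<in>{..<K}. pl (k', n, j) = r} < g then 1 else 0)" for pl
    proof -
      have "(\<Prod>j'<F'. G j' (\<lambda>k. pl (k,n,j'))) = (\<Prod>j'<F'. if j' = j then (if card {k'\<in>{..<K}. pl (k', n, j') = r} < g then 1 else 0) else 1)"
        unfolding G_def by (rule prod.cong) simp_all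
      also have "\<dots> = (if card {k'\<in>{..<K}. pl (k', n, j) = r} < g then 1 else 0)"
        using j by (subst prod.delta) simp_all
      finally show ?thesis .
    qed
    then show ?thesis by simp
  qed
  also have "\<dots> = (\<Prod>j'<F'. avg X (G j'))"
    unfolding avg_def X_def by (rule block_avg[OF n q])
  also have "\<dots> = avg X (G j)"
  proof -
    have "avg X (G j') = (if j' = j then avg X (G j) else 1)" for j'
      by (cases "j' = j") (simp_all add: G_def avg_const[OF finX])
    then have "(\<Prod>j'<F'. avg X (G j')) = (\<Prod>j'<F'. if j' = j then avg X (G j) else 1)"
      by (intro prod.cong) auto
    also have "\<dots> = avg X (G j)" using j by (subst prod.delta) simp_all
    finally show ?thesis .
  qed
  also have "\<dots> \<le> exp (real g - 1 - real K * (1 - exp (-1)) / real q)"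
  proof -
    have e: "avg X (G j) = avg X (\<lambda>x. if card {k'\<in>{..<K}. x k' = r} < g then 1 else 0)"
      unfolding G_def by simp
    show ?thesis unfolding e unfolding avg_def X_def by (rule tail_bound[OF q g r])
  qed
  finally show ?thesis .
qed

lemma avg_div: "avg A (\<lambda>x. f x / c) = avg A f / c"
  unfolding avg_def by (simp add: sum_divide_distrib[symmetric])

lemma avg_affine:
  assumes "finite A" "A \<noteq> {}"
  shows "avg A (\<lambda>x. (c + (\<Sum>k\<in>S. f k x) / B) / D) = (c + (\<Sum>k\<in>S. avg A (f k)) / B) / D"
proof -
  have "(\<lambda>x. (c + (\<Sum>k\<in>S. f k x) / B) / D) = (\<lambda>x. c / D + (1 / (B * D)) * (\<Sum>k\<in>S. f k x))"
    by (intro ext) (simp add: add_divide_distrib)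
  then have "avg A (\<lambda>x. (c + (\<Sum>k\<in>S. f k x) / B) / D) = c / D + (1 / (B * D)) * (\<Sum>k\<in>S. avg A (f k))"
    using assms by (simp add: avg_add avg_const avg_div avg_sum)
  also have "\<dots> = (c + (\<Sum>k\<in>S. avg A (f k)) / B) / D" by (simp add: add_divide_distrib)
  finally show ?thesis .
qed

lemma small_bound:
  fixes K N q F' g :: nat and d :: "nat \<Rightarrow> nat"
  assumes q: "q > 0" and g: "g \<ge> 1" and d: "\<And>k. k < K \<Longrightarrow> d k < N"
  shows "avg (PiE ({..<K}\<times>{..<N}\<times>{..<F'}) (\<lambda>_. {..<q}))
          (\<lambda>pl. \<Sum>k<K. real (card {f\<in>{..<q*F'}. card (cache_set K q pl (d k) f) < g}))
        \<le> real K * (real (q*F') * exp (real g - 1 - real K * (1 - exp (-1)) / real q))"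
proof -
  define \<Omega> where "\<Omega> = PiE ({..<K}\<times>{..<N}\<times>{..<F'}) (\<lambda>_. {..<q})"
  define E0 where "E0 = exp (real g - 1 - real K * (1 - exp (-1)) / real q)"
  have "avg \<Omega> (\<lambda>pl. \<Sum>k<K. real (card {f\<in>{..<q*F'}. card (cache_set K q pl (d k) f) < g}))
      = (\<Sum>k<K. avg \<Omega> (\<lambda>pl. real (card {f\<in>{..<q*F'}. card (cache_set K q pl (d k) f) < g})))"
    by (rule avg_sum)
  also have "\<dots> \<le> (\<Sum>k<K. real (q*F') * E0)"
  proof (rule sum_mono)
    fix k assume k: "k \<in> {..<K}"
    have "avg \<Omega> (\<lambda>pl. real (card {f\<in>{..<q*F'}. card (cache_set K q pl (d k) f) < g}))
        = avg \<Omega> (\<lambda>pl. \<Sum>f<q*F'. if card (cache_set K q pl (d k) f) < g then 1 else 0)"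
      by (simp add: card_filter_sum[of "{..<q*F'}", simplified])
    also have "\<dots> = (\<Sum>f<q*F'. avg \<Omega> (\<lambda>pl. if card (cache_set K q pl (d k) f) < g then 1 else 0))"
      by (rule avg_sum)
    also have "\<dots> = (\<Sum>j<F'. \<Sum>r<q. avg \<Omega> (\<lambda>pl. if card (cache_set K q pl (d k) (j*q+r)) < g then 1 else 0))"
      by (rule sum_blocks)
    also have "\<dots> \<le> (\<Sum>j<F'. \<Sum>r<q. E0)"
    proof (intro sum_mono)
      fix j r assume j: "j \<in> {..<F'}" and r: "r \<in> {..<q}"
      have "avg \<Omega> (\<lambda>pl. if card (cache_set K q pl (d k) (j*q+r)) < g then 1 else 0)
          = avg \<Omega> (\<lambda>pl. if card {k'\<in>{..<K}. pl (k', d k, j) = r} < g then 1 else 0)"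
        using r by (simp add: cache_set_block)
      also have "\<dots> \<le> E0" unfolding \<Omega>_def E0_def
        using d k j r q g by (intro single_block_tail) auto
      finally show "avg \<Omega> (\<lambda>pl. if card (cache_set K q pl (d k) (j*q+r)) < g then 1 else 0) \<le> E0" .
    qed
    also have "\<dots> = real (q*F') * E0" by simp
    finally show "avg \<Omega> (\<lambda>pl. real (card {f\<in>{..<q*F'}. card (cache_set K q pl (d k) f) < g})) \<le> real (q*F') * E0" .
  qed
  also have "\<dots> = real K * (real (q*F') * E0)" by simp
  finally show ?thesis unfolding \<Omega>_def E0_def .
qed

lemma mgf_total:
  fixes K N q F' g k :: nat and d :: "nat \<Rightarrow> nat" and t :: real
  assumes q: "q > 0" and gK: "g \<le> K" and g: "g \<ge> 1" and k: "k < K" and dk: "d k < N" and t: "t \<ge> 0"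
    and A: "A \<subseteq> {..<K}" "card A = g"
  shows "avg (PiE ({..<K}\<times>{..<N}\<times>{..<F'}) (\<lambda>_. {..<q}))
          (\<lambda>pl. avg (PiE ({..<K}\<times>{..<q*F'}) (\<lambda>(k,f). pulldown_choices g (cache_set K q pl (d k) f)))
            (\<lambda>T. exp (t * real (card (Vset (q*F') T k A)))))
        \<le> (1 + (exp (exp t - 1) - 1) * real q / real (K choose g)) ^ F'"
proof -
  have Ane: "A \<noteq> {}" using A g by auto
  have "avg (PiE ({..<K}\<times>{..<N}\<times>{..<F'}) (\<lambda>_. {..<q}))
          (\<lambda>pl. avg (PiE ({..<K}\<times>{..<q*F'}) (\<lambda>(k,f). pulldown_choices g (cache_set K q pl (d k) f)))
            (\<lambda>T. exp (t * real (card (Vset (q*F') T k A)))))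
     \<le> avg (PiE ({..<K}\<times>{..<N}\<times>{..<F'}) (\<lambda>_. {..<q}))
          (\<lambda>pl. \<Prod>j<F'. 1 + (exp (exp t - 1) - 1) * (\<Sum>r<q. wA g A {k'\<in>{..<K}. pl (k', d k, j) = r}))"
    by (intro avg_mono cond_mgf[OF k Ane t])
  also have "\<dots> \<le> (1 + (exp (exp t - 1) - 1) * real q / real (K choose g)) ^ F'"
  proof (rule block_mgf[OF dk A q gK])
    have "exp t - 1 \<ge> 0" using t by simp
    then show "exp (exp t - 1) - 1 \<ge> 0" by simp
  qed
  finally show ?thesis .
qed

lemma expected_le:
  fixes K N q F' g :: nat and d :: "nat \<Rightarrow> nat" and t :: real
  assumes q: "q > 0" and F': "F' > 0" and g: "g \<ge> 2" and gK: "g + 1 \<le> K"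
    and d: "\<And>k. k < K \<Longrightarrow> d k < N" and t: "t > 0"
  shows "avg (PiE ({..<K}\<times>{..<N}\<times>{..<F'}) (\<lambda>_. {..<q}))
          (\<lambda>pl. avg (PiE ({..<K}\<times>{..<q*F'}) (\<lambda>(k,f). pulldown_choices g (cache_set K q pl (d k) f)))
             (rate_md K (q*F')))
       \<le> real (K choose (g+1)) * ln (real (g+1) * (1 + (exp (exp t - 1) - 1) * real q / real (K choose g)) ^ F') / (t * real (q*F'))
         + real K * exp (real g - 1 - real K * (1 - exp (-1)) / real q)"
proof -
  define F where "F = q*F'"
  define \<Omega> where "\<Omega> = PiE ({..<K}\<times>{..<N}\<times>{..<F'}) (\<lambda>_. {..<q})"
  define \<Omega>T where "\<Omega>T = (\<lambda>pl. PiE ({..<K}\<times>{..<F}) (\<lambda>(k,f). pulldown_choices g (cache_set K q pl (d k) f)))"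
  define \<S> where "\<S> = {S. S \<subseteq> {..<K} \<and> card S = g+1}"
  define B0 where "B0 = (1 + (exp (exp t - 1) - 1) * real q / real (K choose g)) ^ F'"
  define B where "B = real (g+1) * B0"
  define E0 where "E0 = exp (real g - 1 - real K * (1 - exp (-1)) / real q)"
  define small where "small = (\<lambda>pl. \<Sum>k<K. real (card {f\<in>{..<F}. card (cache_set K q pl (d k) f) < g}))"
  have Fpos: "real F > 0" using q F' by (simp add: F_def)
  have a0: "exp (exp t - 1) - 1 \<ge> 0" using t by simp
  have B0pos: "B0 > 0" unfolding B0_def using a0 by (intro zero_less_power) (auto intro!: add_pos_nonneg)
  have Bpos: "B > 0" unfolding B_def using B0pos by simp
  have finS: "finite \<S>" unfolding \<S>_def by (rule finite_subset[of _ "Pow {..<K}"]) auto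
  have finO: "finite \<Omega>" "\<Omega> \<noteq> {}" using q by (auto simp: \<Omega>_def PiE_eq_empty_iff intro!: finite_PiE)
  have finOT: "finite (\<Omega>T pl)" "\<Omega>T pl \<noteq> {}" for pl unfolding \<Omega>T_def by (rule OmT_fin, rule OmT_ne)
  define e where "e = (\<lambda>S k T. exp (t * real (card (Vset F T k (S - {k})))))"
  have pt1: "avg (\<Omega>T pl) (rate_md K F)
      \<le> (\<Sum>S\<in>\<S>. (ln B - 1 + (\<Sum>k\<in>S. avg (\<Omega>T pl) (e S k)) / B) / (t * real F)) + small pl / real F" for pl
  proof -
    have "avg (\<Omega>T pl) (rate_md K F)
        \<le> avg (\<Omega>T pl) (\<lambda>T. (\<Sum>S\<in>\<S>. (ln B - 1 + (\<Sum>k\<in>S. e S k T) / B) / (t * real F)) + small pl / real F)"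
    proof (rule avg_mono)
      fix T assume T: "T \<in> \<Omega>T pl"
      have Tch: "T (k,f) \<in> pulldown_choices g (cache_set K q pl (d k) f)" if "k < K" "f < F" for k f
        using PiE_mem[OF T[unfolded \<Omega>T_def], of "(k,f)"] that by simp
      have "rate_md K F T \<le>
         (\<Sum>S\<in>\<S>. real (Max ((\<lambda>k. card (Vset F T k (S - {k}))) ` S))) / real F + small pl / real F"
        unfolding \<S>_def small_def using rate_decomp[of K F T g q pl d] Tch by (simp add: add_divide_distrib)
      also have "(\<Sum>S\<in>\<S>. real (Max ((\<lambda>k. card (Vset F T k (S - {k}))) ` S))) / real F
          \<le> (\<Sum>S\<in>\<S>. (ln B - 1 + (\<Sum>k\<in>S. e S k T) / B) / (t * real F))"
      proof -
        have "(\<Sum>S\<in>\<S>. real (Max ((\<lambda>k. card (Vset F T k (S - {k}))) ` S))) / real F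
            = (\<Sum>S\<in>\<S>. real (Max ((\<lambda>k. card (Vset F T k (S - {k}))) ` S)) / real F)"
          by (rule sum_divide_distrib)
        also have "\<dots> \<le> (\<Sum>S\<in>\<S>. (ln B - 1 + (\<Sum>k\<in>S. e S k T) / B) / (t * real F))"
        proof (rule sum_mono)
          fix S assume S: "S \<in> \<S>"
          have fS: "finite S" "S \<noteq> {}"
            using S unfolding \<S>_def by (auto intro: finite_subset[of _ "{..<K}"])
          have "real (Max ((\<lambda>k. card (Vset F T k (S - {k}))) ` S)) \<le> (ln B - 1 + (\<Sum>k\<in>S. e S k T) / B) / t"
            unfolding e_def by (rule max_softmax[OF fS t Bpos])
          then have "real (Max ((\<lambda>k. card (Vset F T k (S - {k}))) ` S)) / real F \<le> (ln B - 1 + (\<Sum>k\<in>S. e S k T) / B) / t / real F"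
            using Fpos by (intro divide_right_mono) auto
          then show "real (Max ((\<lambda>k. card (Vset F T k (S - {k}))) ` S)) / real F \<le> (ln B - 1 + (\<Sum>k\<in>S. e S k T) / B) / (t * real F)"
            by (simp add: divide_divide_eq_left)
        qed
        finally show ?thesis .
      qed
      finally show "rate_md K F T \<le> (\<Sum>S\<in>\<S>. (ln B - 1 + (\<Sum>k\<in>S. e S k T) / B) / (t * real F)) + small pl / real F"
        by simp
    qed
    also have "\<dots> = (\<Sum>S\<in>\<S>. (ln B - 1 + (\<Sum>k\<in>S. avg (\<Omega>T pl) (e S k)) / B) / (t * real F)) + small pl / real F"
      using finOT[of pl] by (simp add: avg_add avg_sum avg_affine avg_const)
    finally show ?thesis .
  qed
  have "avg \<Omega> (\<lambda>pl. avg (\<Omega>T pl) (rate_md K F))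
      \<le> avg \<Omega> (\<lambda>pl. (\<Sum>S\<in>\<S>. (ln B - 1 + (\<Sum>k\<in>S. avg (\<Omega>T pl) (e S k)) / B) / (t * real F)) + small pl / real F)"
    by (intro avg_mono pt1)
  also have "\<dots> = (\<Sum>S\<in>\<S>. (ln B - 1 + (\<Sum>k\<in>S. avg \<Omega> (\<lambda>pl. avg (\<Omega>T pl) (e S k))) / B) / (t * real F)) + avg \<Omega> small / real F"
    using finO by (simp add: avg_add avg_sum avg_affine avg_div avg_const[OF finO])
  also have "\<dots> \<le> (\<Sum>S\<in>\<S>. (ln B - 1 + (\<Sum>k\<in>S. B0) / B) / (t * real F)) + real K * (real F * E0) / real F"
  proof (intro add_mono sum_mono divide_right_mono add_left_mono)
    show "avg \<Omega> small \<le> real K * (real F * E0)"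
      unfolding small_def \<Omega>_def F_def E0_def using q g d by (intro small_bound) auto
    show "0 \<le> real F" by simp
    show "0 \<le> t * real F" using t by simp
    show "0 \<le> B" using Bpos by simp
    fix S k assume S: "S \<in> \<S>" and k: "k \<in> S"
    have Sk: "S \<subseteq> {..<K}" "card S = g + 1" using S by (auto simp: \<S>_def)
    have fS: "finite S" using Sk(1) by (rule finite_subset) simp
    have A: "S - {k} \<subseteq> {..<K}" "card (S - {k}) = g" using Sk k fS by auto
    have kK: "k < K" using Sk k by auto
    show "avg \<Omega> (\<lambda>pl. avg (\<Omega>T pl) (e S k)) \<le> B0"
    proof -
      have gKK: "g \<le> K" and g1: "1 \<le> g" and t0: "0 \<le> t" using g gK t by auto
      show ?thesis unfolding \<Omega>_def \<Omega>T_def e_def B0_def F_def using mgf_total[where d=d and N=N and F'=F', OF q gKK g1 kK d[OF kK] t0 A(1) A(2)] by simp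
    qed
  qed simp
  also have "\<dots> = real (card \<S>) * (ln B / (t * real F)) + real K * E0"
  proof -
    have h1: "(\<Sum>k\<in>S. B0) / B = 1" if "S \<in> \<S>" for S
      using that B0pos by (simp add: \<S>_def B_def)
    have eq: "(ln B - 1 + (\<Sum>k\<in>S. B0) / B) / (t * real F) = ln B / (t * real F)" if "S \<in> \<S>" for S
      unfolding h1[OF that] by simp
    have "(\<Sum>S\<in>\<S>. (ln B - 1 + (\<Sum>k\<in>S. B0) / B) / (t * real F)) = (\<Sum>S\<in>\<S>. ln B / (t * real F))"
      by (rule sum.cong[OF refl eq])
    then show ?thesis using Fpos by simp
  qed
  also have "card \<S> = K choose (g+1)" unfolding \<S>_def using n_subsets[of "{..<K}" "g+1"] by simp
  finally show ?thesis
    unfolding \<Omega>_def \<Omega>T_def F_def B_def B0_def E0_def by (simp add: mult.commute)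
qed

lemma lim1: "(\<lambda>K::nat. (exp (exp (1 / sqrt (ln (real K))) - 1) - 1) * sqrt (ln (real K)) - 1) \<longlonglongrightarrow> 0"
  by real_asymp

lemma lim2: "(\<lambda>K::nat. sqrt (ln (real K)) / ln (real K)) \<longlonglongrightarrow> 0"
  by real_asymp

lemma lim3: "(\<lambda>K::nat. 1 / sqrt (real K)) \<longlonglongrightarrow> 0"
  by real_asymp

lemma binom_ge: "1 \<le> g \<Longrightarrow> g < n \<Longrightarrow> n \<le> n choose g"
proof (induction n arbitrary: g)
  case 0 then show ?case by simp
next
  case (Suc m)
  obtain g' where g': "g = Suc g'" using Suc.prems by (cases g) auto
  show ?case
  proof (cases "g' = 0")
    case True then show ?thesis using g' by simp
  next
    case False
    then have "m \<le> m choose g'" using Suc.IH[of g'] Suc.prems g' by simp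
    moreover have "1 \<le> m choose Suc g'" using Suc.prems g' by (simp add: Suc_leI)
    ultimately show ?thesis using g' by simp
  qed
qed

lemma binom_ratio: "real (K choose (g+1)) * (real g + 1) = real (K - g) * real (K choose g)"
proof -
  have "Suc g * (K choose Suc g) = (K - g) * (K choose g)"
    using binomial_absorption[of g K] binomial_absorb_comp[of K g] by simp
  then have e: "real (Suc g) * real (K choose Suc g) = real (K - g) * real (K choose g)"
    by (metis of_nat_mult)
  have "real (Suc g) = real g + 1" by simp
  then show ?thesis using e by (metis Suc_eq_plus1 mult.commute)
qed

lemma e_inv_le: "exp (-1::real) \<le> 4/9"
proof -
  have "3/2 \<le> exp (1/2::real)" using exp_ge_add_one_self[of "1/2::real"] by simp
  then have "(3/2)^2 \<le> exp (1/2::real) ^ 2" by (intro power_mono) auto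
  also have "exp (1/2::real) ^ 2 = exp 1" by (simp add: exp_of_nat_mult[symmetric])
  finally have "9/4 \<le> exp (1::real)" by (simp add: power2_eq_square)
  then show ?thesis by (simp add: exp_minus field_simps)
qed

lemma E0_bound:
  fixes K q g :: nat
  assumes q: "q \<ge> 1" and lnK: "ln (real K) > 0"
    and qb: "real q \<le> real K / (27 / 4 * ln (real K))" and gb: "real g \<le> real K / (3 * real q)"
  shows "real K * exp (real g - 1 - real K * (1 - exp (-1)) / real q) \<le> 1 / sqrt (real K)"
proof -
  have Kpos: "real K > 0" using lnK by (cases K) auto
  define \<mu> where "\<mu> = real K / real q"
  have qpos: "real q > 0" using q by simp
  have mu1: "27/4 * ln (real K) \<le> \<mu>"
    using qb lnK qpos unfolding \<mu>_def by (simp add: field_simps)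
  have g3: "real g \<le> \<mu> / 3" using gb qpos unfolding \<mu>_def by (simp add: field_simps)
  have "real g - 1 - real K * (1 - exp (-1)) / real q = real g - 1 - \<mu> * (1 - exp (-1))"
    unfolding \<mu>_def by simp
  also have "\<dots> \<le> \<mu> / 3 - \<mu> * (1 - 4/9)"
  proof -
    have m0: "\<mu> \<ge> 0" using mu1 lnK by linarith
    have "\<mu> * (1 - 4/9) \<le> \<mu> * (1 - exp (-1))" using e_inv_le m0 by (intro mult_left_mono) auto
    then show ?thesis using g3 by linarith
  qed
  also have "\<dots> = - (2/9) * \<mu>" by simp
  also have "\<dots> \<le> - (3/2) * ln (real K)" using mu1 by simp
  finally have ex: "exp (real g - 1 - real K * (1 - exp (-1)) / real q) \<le> exp (- (3/2) * ln (real K))"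
    by simp
  have sq: "sqrt (real K) > 0" using Kpos by simp
  have "ln (sqrt (real K)) = ln (real K) / 2" using Kpos by (simp add: ln_sqrt)
  then have "- (3/2) * ln (real K) = - (ln (real K) + ln (sqrt (real K)))" by simp
  then have "exp (- (3/2) * ln (real K)) = inverse (exp (ln (real K) + ln (sqrt (real K))))"
    by (metis exp_minus)
  also have "\<dots> = inverse (real K * sqrt (real K))"
    using Kpos sq by (simp add: exp_add)
  finally have s: "exp (- (3/2) * ln (real K)) = inverse (real K * sqrt (real K))" .
  have "real K * exp (real g - 1 - real K * (1 - exp (-1)) / real q) \<le> real K * inverse (real K * sqrt (real K))"
  proof (rule mult_left_mono)
    show "exp (real g - 1 - real K * (1 - exp (-1)) / real q) \<le> inverse (real K * sqrt (real K))"
      using ex unfolding s .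
  qed simp
  also have "\<dots> = 1 / sqrt (real K)" using Kpos sq by (simp add: field_simps)
  finally show ?thesis .
qed

lemma expected_eq:
  assumes q: "grp_size N M > 0"
  shows "expected_rate_md K N M F' g d =
     avg (PiE ({..<K}\<times>{..<N}\<times>{..<F'}) (\<lambda>_. {..<grp_size N M}))
       (\<lambda>pl. avg (PiE ({..<K}\<times>{..<grp_size N M * F'}) (\<lambda>(k,f). pulldown_choices g (cache_set K (grp_size N M) pl (d k) f)))
          (rate_md K (grp_size N M * F')))"
proof -
  define q where "q = grp_size N M"
  define \<Omega> where "\<Omega> = PiE ({..<K}\<times>{..<N}\<times>{..<F'}) (\<lambda>_. {..<q})"
  define \<Omega>T where "\<Omega>T = (\<lambda>pl. PiE ({..<K}\<times>{..<q*F'}) (\<lambda>(k,f). pulldown_choices g (cache_set K q pl (d k) f)))"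
  have finO: "finite \<Omega>" "\<Omega> \<noteq> {}" using q by (auto simp: \<Omega>_def q_def PiE_eq_empty_iff intro!: finite_PiE)
  have finOT: "finite (\<Omega>T pl)" "\<Omega>T pl \<noteq> {}" for pl unfolding \<Omega>T_def by (rule OmT_fin, rule OmT_ne)
  have "expected_rate_md K N M F' g d = measure_pmf.expectation (pmf_of_set \<Omega> \<bind> (\<lambda>pl. pmf_of_set (\<Omega>T pl))) (rate_md K (q*F'))"
    unfolding expected_rate_md_def Let_def placement_pmf_def pulldown_pmf_def \<Omega>_def \<Omega>T_def q_def ..
  also have "\<dots> = (\<Sum>a\<in>\<Omega>. measure_pmf.expectation (pmf_of_set (\<Omega>T a)) (rate_md K (q*F')) /\<^sub>R real (card \<Omega>))"
    using finO finOT by (intro pmf_expectation_bind_pmf_of_set) auto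
  also have "\<dots> = (\<Sum>a\<in>\<Omega>. avg (\<Omega>T a) (rate_md K (q*F')) / real (card \<Omega>))"
  proof (rule sum.cong[OF refl])
    fix a
    have "measure_pmf.expectation (pmf_of_set (\<Omega>T a)) (rate_md K (q*F')) = avg (\<Omega>T a) (rate_md K (q*F'))"
      unfolding avg_def using finOT[of a] by (simp add: integral_pmf_of_set)
    then show "measure_pmf.expectation (pmf_of_set (\<Omega>T a)) (rate_md K (q*F')) /\<^sub>R real (card \<Omega>) = avg (\<Omega>T a) (rate_md K (q*F')) / real (card \<Omega>)"
      by (simp add: divide_inverse mult.commute)
  qed
  also have "\<dots> = avg \<Omega> (\<lambda>pl. avg (\<Omega>T pl) (rate_md K (q*F')))"
    unfolding avg_def[of \<Omega>] by (rule sum_divide_distrib[symmetric])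
  finally show ?thesis unfolding \<Omega>_def \<Omega>T_def q_def .
qed

lemma T1_bound:
  fixes C1 C R L1 LK LC q t c F :: real
  assumes "C1 \<le> C * R" "0 \<le> C1" "0 \<le> L1" "L1 \<le> LK" "LK > 0" "LK \<le> LC" "q \<ge> 1" "t > 0" "c > 0" "C > 0"
    "F \<ge> c * C * LC^2" "R \<ge> 0"
  shows "C1 * L1 / (t * q * F) \<le> R / (t * c * LK)"
proof -
  have LC: "LC > 0" using assms by linarith
  have w: "0 < t * (c * C * LC^2)" using assms LC by simp
  have "t * (c * C * LC^2) \<le> t * F" using assms by simp
  also have "\<dots> \<le> t * q * F"
  proof -
    have "c * C * LC^2 > 0" using assms LC by simp
    then have F0: "F > 0" using assms by linarith
    have "t * F * 1 \<le> t * F * q" using assms F0 by (intro mult_left_mono) auto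
    then show ?thesis by (simp add: mult.commute mult.left_commute)
  qed
  finally have wz: "t * (c * C * LC^2) \<le> t * q * F" .
  have "C1 * L1 \<le> (C * R) * LK" using assms by (intro mult_mono) auto
  then have "C1 * L1 / (t * q * F) \<le> (C * R * LK) / (t * (c * C * LC^2))"
    using assms w wz by (intro frac_le) auto
  also have "\<dots> = R * LK / (t * c * LC^2)" using assms by (simp add: field_simps)
  also have "\<dots> \<le> R * LK / (t * c * LK^2)"
    using assms by (intro divide_left_mono mult_left_mono power_mono mult_pos_pos) auto
  also have "\<dots> = R / (t * c * LK)" using assms by (simp add: field_simps power2_eq_square)
  finally show ?thesis .
qed

theorem theorem7:
  fixes c :: real
  assumes "c > 0"
  shows "\<exists>\<epsilon> :: nat \<Rightarrow> real. \<epsilon> \<longlonglongrightarrow> 0 \<and>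
    (\<forall>K N g (M :: real) (d :: nat \<Rightarrow> nat).
       0 < M \<longrightarrow> M \<le> real N \<longrightarrow> N > K \<longrightarrow>
       2 \<le> g \<longrightarrow> real g \<le> real K / (3 * real (grp_size N M)) \<longrightarrow>
       real (grp_size N M) \<le> real K / (27 / 4 * ln (real K)) \<longrightarrow>
       (\<forall>k<K. d k < N) \<longrightarrow>
       expected_rate_md K N M
          (nat \<lceil>c * real (K choose g) * (ln (real (K choose g)))\<^sup>2\<rceil>) g d
         \<le> 4 / 3 * (real K / (real g + 1)) * (1 + \<epsilon> K))"
proof -
  note c = assms
  define \<epsilon> where "\<epsilon> = (\<lambda>K::nat. ((exp (exp (1 / sqrt (ln (real K))) - 1) - 1) * sqrt (ln (real K)) - 1)
      + (1 / c) * (sqrt (ln (real K)) / ln (real K)) + 1 / sqrt (real K))"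
  have lim: "\<epsilon> \<longlonglongrightarrow> 0"
  proof -
    have "(\<lambda>K::nat. ((exp (exp (1 / sqrt (ln (real K))) - 1) - 1) * sqrt (ln (real K)) - 1)
      + (1 / c) * (sqrt (ln (real K)) / ln (real K)) + 1 / sqrt (real K)) \<longlonglongrightarrow> 0 + 0 + 0"
      by (intro tendsto_add lim1 lim3 tendsto_mult_right_zero lim2)
    then show ?thesis unfolding \<epsilon>_def by simp
  qed
  have bound: "expected_rate_md K N M
          (nat \<lceil>c * real (K choose g) * (ln (real (K choose g)))\<^sup>2\<rceil>) g d
         \<le> 4 / 3 * (real K / (real g + 1)) * (1 + \<epsilon> K)"
    if M: "0 < M" "M \<le> real N" and NK: "N > K" and g2: "2 \<le> g"
      and gb: "real g \<le> real K / (3 * real (grp_size N M))"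
      and qb: "real (grp_size N M) \<le> real K / (27 / 4 * ln (real K))"
      and d: "\<forall>k<K. d k < N"
    for K N g M d
  proof -
    define q where "q = grp_size N M"
    have q1: "q \<ge> 1"
    proof -
      have "real N / M > 0" using M NK by simp
      then have "\<lceil>real N / M\<rceil> \<ge> 1" by (simp add: one_le_ceiling)
      then show ?thesis unfolding q_def grp_size_def by linarith
    qed
    have qpos: "q > 0" using q1 by simp
    have lnK: "ln (real K) > 0"
    proof (rule ccontr)
      assume "\<not> ln (real K) > 0"
      then have "real K / (27 / 4 * ln (real K)) \<le> 0"
        by (intro divide_nonneg_nonpos) auto
      then show False using qb q1 unfolding q_def[symmetric] by simp
    qed
    have K2: "K \<ge> 2"
    proof (rule ccontr)
      assume "\<not> 2 \<le> K"
      then have "K = 0 \<or> K = 1" by auto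
      then show False using lnK by auto
    qed
    have K1: "real K > 1" using K2 by simp
    have g3: "3 * real g \<le> real K"
    proof -
      have "real K / (3 * real q) \<le> real K / 3" using q1 by (intro divide_left_mono) auto
      then show ?thesis using gb unfolding q_def[symmetric] by simp
    qed
    have gK1: "g + 1 \<le> K" using g3 g2 by linarith
    define C where "C = K choose g"
    have CK: "K \<le> C" unfolding C_def using g2 gK1 by (intro binom_ge) auto
    have Cpos: "real C > 0" using CK K1 by simp
    have lnC: "ln (real K) \<le> ln (real C)" using CK K1 by simp
    define F' where "F' = nat \<lceil>c * real C * (ln (real C))\<^sup>2\<rceil>"
    have F'ge: "real F' \<ge> c * real C * (ln (real C))\<^sup>2" unfolding F'_def by linarith
    have F'pos: "F' > 0"
    proof -
      have "ln (real C) > 0" using lnC lnK by linarith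
      then have "c * real C * (ln (real C))\<^sup>2 > 0" using c Cpos by simp
      then show ?thesis using F'ge by linarith
    qed
    define t where "t = 1 / sqrt (ln (real K))"
    have tpos: "t > 0" unfolding t_def using lnK by simp
    define a where "a = exp (exp t - 1) - 1"
    have a0: "a \<ge> 0" unfolding a_def using tpos by simp
    define R where "R = real K / (real g + 1)"
    have R1: "R \<ge> 1" unfolding R_def using gK1 by simp
    define C1 where "C1 = real (K choose (g+1))"
    have C1R: "C1 \<le> real C * R"
    proof -
      have "C1 * (real g + 1) = real (K - g) * real C" unfolding C1_def C_def by (rule binom_ratio)
      also have "\<dots> \<le> real K * real C" using Cpos by (intro mult_right_mono) auto
      finally have "C1 * (real g + 1) \<le> real K * real C" .
      then show ?thesis unfolding R_def by (simp add: field_simps)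
    qed
    have C1nn: "C1 \<ge> 0" unfolding C1_def by simp
    define E0 where "E0 = exp (real g - 1 - real K * (1 - exp (-1)) / real q)"
    have main: "expected_rate_md K N M F' g d
        \<le> C1 * ln (real (g+1) * (1 + a * real q / real C) ^ F') / (t * real (q*F')) + real K * E0"
      unfolding expected_eq[OF qpos[unfolded q_def]] q_def[symmetric] C1_def a_def C_def E0_def
      using expected_le[OF qpos F'pos g2 gK1 _ tpos, of d N] d by simp
    have lnsplit: "ln (real (g+1) * (1 + a * real q / real C) ^ F') \<le> ln (real (g+1)) + real F' * (a * real q / real C)"
    proof -
      have b: "1 + a * real q / real C > 0" using a0 Cpos qpos by (smt (verit) divide_nonneg_pos mult_nonneg_nonneg of_nat_0_le_iff)
      have "ln (real (g+1) * (1 + a * real q / real C) ^ F') = ln (real (g+1)) + real F' * ln (1 + a * real q / real C)"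
        using b by (simp add: ln_mult ln_realpow)
      also have "\<dots> \<le> ln (real (g+1)) + real F' * (a * real q / real C)"
        using a0 Cpos by (intro add_left_mono mult_left_mono ln_add_one_self_le_self) auto
      finally show ?thesis .
    qed
    have tq: "t * real (q*F') > 0" using tpos qpos F'pos by simp
    have "C1 * ln (real (g+1) * (1 + a * real q / real C) ^ F') / (t * real (q*F'))
        \<le> C1 * (ln (real (g+1)) + real F' * (a * real q / real C)) / (t * real (q*F'))"
      using lnsplit C1nn tq by (intro divide_right_mono mult_left_mono) auto
    also have "\<dots> = C1 * ln (real (g+1)) / (t * real q * real F') + C1 * a / (t * real C)"
      using tq Cpos tpos qpos F'pos by (simp add: field_simps)
    also have "C1 * ln (real (g+1)) / (t * real q * real F') \<le> R / (t * c * ln (real K))"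
    proof (rule T1_bound[OF C1R C1nn _ _ lnK lnC _ tpos c Cpos F'ge])
      show "0 \<le> ln (real (g+1))" by simp
      show "ln (real (g+1)) \<le> ln (real K)" using gK1 by simp
      show "1 \<le> real q" using q1 by simp
      show "0 \<le> R" using R1 by simp
    qed
    also have "C1 * a / (t * real C) \<le> R * (a / t)"
    proof -
      have "C1 * a / (t * real C) = (C1 / real C) * (a / t)" by simp
      also have "\<dots> \<le> R * (a / t)"
        using C1R Cpos a0 tpos by (intro mult_right_mono) (auto simp: divide_le_eq mult.commute)
      finally show ?thesis .
    qed
    finally have m1: "C1 * ln (real (g+1) * (1 + a * real q / real C) ^ F') / (t * real (q*F'))
        \<le> R / (t * c * ln (real K)) + R * (a / t)" by simp
    have m2: "real K * E0 \<le> R * (1 / sqrt (real K))"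
    proof -
      have "real K * E0 \<le> 1 / sqrt (real K)"
        unfolding E0_def using E0_bound[OF q1 lnK] qb gb unfolding q_def by simp
      also have "\<dots> \<le> R * (1 / sqrt (real K))" using R1 K1 using mult_right_mono[of 1 R "1 / sqrt (real K)"] by simp
      finally show ?thesis .
    qed
    have e: "1 + \<epsilon> K = a / t + 1 / (t * c * ln (real K)) + 1 / sqrt (real K)"
    proof -
      have st: "sqrt (ln (real K)) > 0" using lnK by simp
      have "a / t = (exp (exp (1 / sqrt (ln (real K))) - 1) - 1) * sqrt (ln (real K))"
        unfolding a_def t_def by simp
      moreover have "1 / (t * c * ln (real K)) = (1 / c) * (sqrt (ln (real K)) / ln (real K))"
        unfolding t_def using st c lnK by (simp add: field_simps)
      ultimately show ?thesis unfolding \<epsilon>_def by simp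
    qed
    have "expected_rate_md K N M F' g d \<le> R * (1 + \<epsilon> K)"
      using main m1 m2 unfolding e by (simp add: algebra_simps)
    also have "\<dots> \<le> 4 / 3 * R * (1 + \<epsilon> K)"
    proof -
      have "a / t \<ge> 0" using a0 tpos by simp
      moreover have "1 / (t * c * ln (real K)) \<ge> 0" using tpos c lnK by simp
      moreover have "1 / sqrt (real K) \<ge> 0" by simp
      ultimately have "1 + \<epsilon> K \<ge> 0" unfolding e by linarith
      then show ?thesis using R1 by (simp add: mult_right_mono)
    qed
    finally show ?thesis unfolding F'_def C_def R_def by simp
  qed
  show ?thesis using lim bound by blast
qed

end
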